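(* Let $l\ge1$ and let $A$ be a real $l\times l$ matrix. If $\det(I+\overline IA)\ge0$ for every $l\times l$ diagonal matrix $\overline I$ whose diagonal entries are each $1$ or $-1$, then $|\det A|\le1$.
   Context: $I$ denotes the $l\times l$ identity matrix. *)

theory Defs
  imports "HOL-Analysis.Analysis"
begin

end

theory Submission
  imports Defs "HOL-Library.FuncSet"
begin

lemma entry:
  fixes A :: "real ^ 'n ^ 'n"
  shows "(mat 1 + (\<chi> i j. if i = j then s i else 0) ** A) $ i $ j
         = (if i = j then 1 else 0) + s i * A$i$j"
proof -
  have "(\<Sum>k\<in>UNIV. (if i = k then s i else 0) * A$k$j) = (\<Sum>k\<in>UNIV. if i = k then s i * A$k$j else 0)"
    by (intro sum.cong) auto
  also have "\<dots> = s i * A$i$j" by simp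
  finally show ?thesis by (simp add: matrix_matrix_mult_def mat_def)
qed

lemma key:
  fixes A :: "real ^ 'n ^ 'n" and w :: "real \<Rightarrow> real"
  shows "(\<Sum>s\<in>PiE UNIV (\<lambda>_. {1,-1}). (\<Prod>i\<in>UNIV. w (s i)) *
            det (mat 1 + (\<chi> i j. if i = j then s i else 0) ** A))
       = (\<Sum>p\<in>{p. p permutes UNIV}. of_int (sign p) *
            (\<Prod>i\<in>UNIV. \<Sum>t\<in>{1,-1}. w t * ((if i = p i then 1 else 0) + t * A$i$p i)))"
proof -
  let ?S = "PiE (UNIV::'n set) (\<lambda>_. {1,-1::real})"
  have "(\<Sum>s\<in>?S. (\<Prod>i\<in>UNIV. w (s i)) *
            det (mat 1 + (\<chi> i j. if i = j then s i else 0) ** A))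
      = (\<Sum>s\<in>?S. \<Sum>p\<in>{p. p permutes UNIV}. of_int (sign p) *
            (\<Prod>i\<in>UNIV. w (s i) * ((if i = p i then 1 else 0) + s i * A$i$p i)))"
    unfolding det_def entry by (simp add: sum_distrib_left prod.distrib mult.left_commute)
  also have "\<dots> = (\<Sum>p\<in>{p. p permutes UNIV}. \<Sum>s\<in>?S. of_int (sign p) *
            (\<Prod>i\<in>UNIV. w (s i) * ((if i = p i then 1 else 0) + s i * A$i$p i)))"
    by (rule sum.swap)
  also have "\<dots> = (\<Sum>p\<in>{p. p permutes UNIV}. of_int (sign p) *
            (\<Prod>i\<in>UNIV. \<Sum>t\<in>{1,-1}. w t * ((if i = p i then 1 else 0) + t * A$i$p i)))"
    by (subst prod_sum_PiE) (simp_all add: sum_distrib_left)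
  finally show ?thesis .
qed

theorem corollary2p1:
  fixes A :: "real ^ 'n ^ 'n"
  assumes "\<forall>s :: 'n \<Rightarrow> real. (\<forall>i. s i = 1 \<or> s i = -1) \<longrightarrow>
             det (mat 1 + (\<chi> i j. if i = j then s i else 0) ** A) \<ge> 0"
  shows "\<bar>det A\<bar> \<le> 1"
proof -
  let ?S = "PiE (UNIV::'n set) (\<lambda>_. {1,-1::real})"
  let ?f = "\<lambda>s. det (mat 1 + (\<chi> i j. if i = j then s i else 0) ** A)"
  have fin: "finite ?S" by (simp add: finite_PiE)
  have nn: "?f s \<ge> 0" if "s \<in> ?S" for s
    using assms that by (auto simp: PiE_def Pi_def)
  have ps: "\<bar>\<Prod>i\<in>UNIV. s i\<bar> = 1" if "s \<in> ?S" for s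
    using that by (auto simp: PiE_def Pi_def abs_prod intro!: prod.neutral) (metis abs_1 abs_minus_cancel)
  have s1: "(\<Sum>s\<in>?S. ?f s) = 2 ^ CARD('n)"
  proof -
    have "(\<Sum>s\<in>?S. ?f s) = (\<Sum>s\<in>?S. (\<Prod>i\<in>UNIV. (\<lambda>_. 1::real) (s i)) * ?f s)" by simp
    also have "\<dots> = (\<Sum>p\<in>{p. p permutes UNIV}. of_int (sign p) *
            (\<Prod>i\<in>UNIV. \<Sum>t\<in>{1,-1::real}. 1 * ((if i = p i then 1 else 0) + t * A$i$p i)))"
      by (rule key)
    also have "\<dots> = (\<Sum>p\<in>{p. p permutes UNIV}. of_int (sign p) *
            (\<Prod>i\<in>UNIV. 2 * (mat 1 :: real^'n^'n)$i$p i))"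
      by (intro sum.cong refl arg_cong2[where f="(*)"] prod.cong) (auto simp: mat_def)
    also have "\<dots> = 2 ^ CARD('n) * det (mat 1 :: real^'n^'n)"
      by (simp add: det_def prod.distrib sum_distrib_left mult.left_commute)
    finally show ?thesis by simp
  qed
  have s2: "(\<Sum>s\<in>?S. (\<Prod>i\<in>UNIV. s i) * ?f s) = 2 ^ CARD('n) * det A"
  proof -
    have "(\<Sum>s\<in>?S. (\<Prod>i\<in>UNIV. s i) * ?f s) = (\<Sum>p\<in>{p. p permutes UNIV}. of_int (sign p) *
            (\<Prod>i\<in>UNIV. \<Sum>t\<in>{1,-1::real}. t * ((if i = p i then 1 else 0) + t * A$i$p i)))"
      using key[of "\<lambda>t. t" A] by simp
    also have "\<dots> = (\<Sum>p\<in>{p. p permutes UNIV}. of_int (sign p) *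
            (\<Prod>i\<in>UNIV. 2 * A$i$p i))"
      by (intro sum.cong refl arg_cong2[where f="(*)"] prod.cong) auto
    also have "\<dots> = 2 ^ CARD('n) * det A"
      by (simp add: det_def prod.distrib sum_distrib_left mult.left_commute)
    finally show ?thesis by simp
  qed
  have "2 ^ CARD('n) * \<bar>det A\<bar> = \<bar>\<Sum>s\<in>?S. (\<Prod>i\<in>UNIV. s i) * ?f s\<bar>"
    by (simp add: s2 abs_mult)
  also have "\<dots> \<le> (\<Sum>s\<in>?S. \<bar>(\<Prod>i\<in>UNIV. s i) * ?f s\<bar>)" by (rule sum_abs)
  also have "\<dots> = (\<Sum>s\<in>?S. ?f s)"
    by (intro sum.cong refl) (simp add: abs_mult ps nn)
  also have "\<dots> = 2 ^ CARD('n) * 1" by (simp add: s1)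
  finally show ?thesis by simp
qed

end
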